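(* Let $k\ge 3$ and let $\mathcal C_k=S(123,\,(k-1)(k-2)\cdots 21(k+1)k,\,k(k-1)\cdots 21(k+1))$. If $\pi\in\mathcal C_k\cap S_n$ with $n\ge1$ and $\pi_l=n$, then $l\le k$. Moreover, for every $n\ge 0$, $|\mathcal C_k\cap S_n|$ equals the number of nodes at level $n$ of the generating tree defined by the succession rule with axiom $(1)$ and productions $$(1)\rightsquigarrow(2),\qquad (h)\rightsquigarrow(2)(3)\cdots(h)(h+1)\ \ \text{for } 2\le h<k,\qquad (k)\rightsquigarrow(2)(3)\cdots(k-1)(k-1)(k).$$ *)

theory Defs
  imports Main "HOL-Library.Sublist" "HOL-Combinatorics.Multiset_Permutations"
begin

definition Sn :: "nat \<Rightarrow> nat list set" where
  "Sn n = permutations_of_set {1..n}"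

definition order_iso :: "nat list \<Rightarrow> nat list \<Rightarrow> bool" where
  "order_iso xs ys \<longleftrightarrow> length xs = length ys \<and>
     (\<forall>i<length xs. \<forall>j<length xs. (xs ! i < xs ! j) \<longleftrightarrow> (ys ! i < ys ! j))"

definition contains :: "nat list \<Rightarrow> nat list \<Rightarrow> bool" where
  "contains p sigma \<longleftrightarrow> (\<exists>tau. subseq tau p \<and> order_iso tau sigma)"

definition Av :: "nat list set \<Rightarrow> nat list set" where
  "Av P = {p. (\<exists>n. p \<in> Sn n) \<and> (\<forall>sigma\<in>P. \<not> contains p sigma)}"

definition Ck :: "nat \<Rightarrow> nat list set" where
  "Ck k = Av {[1,2,3], rev [1..<k] @ [k+1, k], rev [1..<k+1] @ [k+1]}"

(* Succession rule: (1) ~> (2); (h) ~> (2)(3)...(h+1) for 2 <= h < k;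
   (k) ~> (2)(3)...(k-1)(k-1)(k).  Labels > k never occur. *)
definition children :: "nat \<Rightarrow> nat \<Rightarrow> nat list" where
  "children k h =
     (if h = 1 then [2]
      else if 2 \<le> h \<and> h < k then [2..<h+2]
      else if h = k then [2..<k] @ [k-1, k]
      else [])"

(* Labels of the nodes at level n of the generating tree; the root (axiom (1)) is at level 0. *)
fun level :: "nat \<Rightarrow> nat \<Rightarrow> nat list" where
  "level k 0 = [1]"
| "level k (Suc n) = concat (map (children k) (level k n))"

end

theory Submission
  imports Defs
begin

definition insN :: "nat list \<Rightarrow> nat \<Rightarrow> nat list" where
  "insN p j = take j p @ Suc (length p) # drop j p"

fun dr :: "nat list \<Rightarrow> nat" where
  "dr [] = 0"
| "dr [x] = 1"
| "dr (x # y # xs) = (if y < x then Suc (dr (y # xs)) else 1)"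

lemma dr_le: "dr xs \<le> length xs"
  by (induction xs rule: dr.induct) auto

lemma dr_iff: "j \<le> length xs \<Longrightarrow> sorted_wrt (>) (take j xs) \<longleftrightarrow> j \<le> dr xs"
proof (induction xs arbitrary: j rule: dr.induct)
  case 1 then show ?case by simp
next
  case (2 x) then show ?case by (cases j) auto
next
  case (3 x y xs)
  show ?case
  proof (cases j)
    case 0 then show ?thesis by simp
  next
    case (Suc j')
    show ?thesis
    proof (cases "y < x")
      case True
      have ih: "sorted_wrt (>) (take j' (y#xs)) \<longleftrightarrow> j' \<le> dr (y#xs)"
        using 3 Suc True by simp
      have "sorted_wrt (>) (take j' (y#xs)) \<Longrightarrow> \<forall>z\<in>set (take j' (y#xs)). z < x"
        using True by (cases j') auto
      then show ?thesis using Suc True ih by auto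
    next
      case False
      then show ?thesis using Suc by (cases j') auto
    qed
  qed
qed

lemma sorted_wrt_subseq: "subseq xs ys \<Longrightarrow> sorted_wrt R ys \<Longrightarrow> sorted_wrt R xs"
  by (induction rule: list_emb.induct) (auto dest: list_emb_set)

lemma sorted_iso:
  assumes "sorted_wrt (>) xs" "sorted_wrt (>) (ys::nat list)" "length xs = length ys"
  shows "order_iso xs ys"
proof -
  have a: "(xs ! i < xs ! j) \<longleftrightarrow> j < i" if "i < length xs" "j < length xs" for i j
    using that assms(1) sorted_wrt_nth_less[of "(>)" xs] by (metis less_asym' linorder_neqE_nat)
  have b: "(ys ! i < ys ! j) \<longleftrightarrow> j < i" if "i < length xs" "j < length xs" for i j
    using that assms sorted_wrt_nth_less[of "(>)" ys] by (metis less_asym' linorder_neqE_nat)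
  show ?thesis unfolding order_iso_def using a b assms(3) by simp
qed

lemma iso_append:
  assumes "order_iso xs us" "order_iso ys vs"
    "\<forall>x\<in>set xs. \<forall>y\<in>set ys. x < y" "\<forall>x\<in>set us. \<forall>y\<in>set vs. x < y"
  shows "order_iso (xs @ ys) (us @ vs)"
proof -
  have l: "length xs = length us" "length ys = length vs" using assms unfolding order_iso_def by auto
  show ?thesis unfolding order_iso_def
  proof (intro conjI allI impI)
    show "length (xs @ ys) = length (us @ vs)" using l by simp
    fix i j assume i: "i < length (xs @ ys)" and j: "j < length (xs @ ys)"
    show "((xs @ ys) ! i < (xs @ ys) ! j) = ((us @ vs) ! i < (us @ vs) ! j)"
    proof (cases "i < length xs"; cases "j < length xs")
      assume "i < length xs" "j < length xs"
      then show ?thesis using assms(1) l unfolding order_iso_def by (simp add: nth_append)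
    next
      assume "i < length xs" "\<not> j < length xs"
      then show ?thesis using assms(3,4) l i j by (simp add: nth_append)
    next
      assume a: "\<not> i < length xs" "j < length xs"
      have "xs ! j < ys ! (i - length xs)" using assms(3) a i by (simp add: nth_mem)
      moreover have "us ! j < vs ! (i - length us)" using assms(4) a i l by (simp add: nth_mem)
      ultimately show ?thesis using a l by (simp add: nth_append)
    next
      assume "\<not> i < length xs" "\<not> j < length xs"
      then show ?thesis using assms(2) l i j unfolding order_iso_def by (simp add: nth_append)
    qed
  qed
qed


lemma Ck_iff: "p \<in> Ck k \<longleftrightarrow> (\<exists>n. p \<in> Sn n) \<and> \<not> contains p [1,2,3]
   \<and> \<not> contains p (rev [1..<k] @ [k+1, k]) \<and> \<not> contains p (rev [1..<k+1] @ [k+1])"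
  by (auto simp: Ck_def Av_def)

lemma Sn_iff: "p \<in> Sn n \<longleftrightarrow> set p = {1..n} \<and> distinct p"
  by (simp add: Sn_def permutations_of_set_def)

lemma Sn_length: "p \<in> Sn n \<Longrightarrow> length p = n"
  by (metis Sn_iff card_atLeastAtMost diff_Suc_1 distinct_card)

lemma contains_mono: "subseq p q \<Longrightarrow> contains p \<sigma> \<Longrightarrow> contains q \<sigma>"
  unfolding contains_def using subseq_order.trans by blast

lemma subseq_single: "x \<in> set xs \<Longrightarrow> subseq [x] xs"
proof -
  assume "x \<in> set xs"
  then obtain u v where "xs = u @ x # v" by (metis split_list)
  moreover have "subseq [x] (x # v)" by simp
  ultimately show ?thesis using subseq_drop_many by metis
qed

lemma subseq_subset: "subseq xs ys \<Longrightarrow> set xs \<subseteq> set ys"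
  by (induction rule: list_emb.induct) auto

lemma subseq_two: "i < i' \<Longrightarrow> i' < length xs \<Longrightarrow> subseq [xs!i, xs!i'] xs"
proof -
  assume a: "i < i'" "i' < length xs"
  have "take i' xs ! i = xs ! i" "i < length (take i' xs)" using a by auto
  then have "subseq [xs!i] (take i' xs)" by (metis nth_mem subseq_single)
  moreover have "subseq [xs!i'] (drop i' xs)" using a
    by (metis Cons_nth_drop_Suc list.set_intros(1) subseq_single)
  ultimately have "subseq ([xs!i] @ [xs!i']) (take i' xs @ drop i' xs)"
    by (rule list_emb_append_mono)
  then show ?thesis by simp
qed

lemma subseq_split:
  assumes "subseq tau (xs @ N # ys)"
  shows "subseq tau (xs @ ys) \<or> (\<exists>t1 t2. tau = t1 @ N # t2 \<and> subseq t1 xs \<and> subseq t2 ys)"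
proof -
  obtain a b where ab: "tau = a @ b" "subseq a xs" "subseq b (N # ys)"
    using assms by (auto elim: subseq_appendE)
  show ?thesis
  proof (cases b)
    case Nil then show ?thesis using ab by (simp add: subseq_rev_drop_many)
  next
    case (Cons c b')
    show ?thesis
    proof (cases "c = N")
      case True then show ?thesis using ab Cons by auto
    next
      case False
      then have "subseq b ys" using ab Cons by auto
      then show ?thesis using ab by (simp add: list_emb_append_mono)
    qed
  qed
qed

lemma avoid_split:
  assumes "contains (xs @ N # ys) \<sigma>" "\<not> contains (xs @ ys) \<sigma>"
  obtains t1 t2 where "subseq t1 xs" "subseq t2 ys" "order_iso (t1 @ N # t2) \<sigma>"
  using assms subseq_split unfolding contains_def by metis

lemma iso_max:
  assumes "order_iso (t1 @ N # t2) \<sigma>" "\<forall>x\<in>set t1 \<union> set t2. x < N" "a < length \<sigma>" "a \<noteq> length t1"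
  shows "\<sigma>!a < \<sigma>!(length t1)"
proof -
  let ?t = "t1 @ N # t2"
  have l: "length ?t = length \<sigma>" using assms(1) order_iso_def by blast
  have "?t ! a \<in> set t1 \<union> set t2"
  proof (cases "a < length t1")
    case True then show ?thesis by (simp add: nth_append)
  next
    case False
    then have "a - length t1 = Suc (a - length t1 - 1)" using assms(4) by simp
    then have "?t ! a = t2 ! (a - length t1 - 1)" using False by (simp add: nth_append)
    moreover have "a - length t1 - 1 < length t2" using l assms(3,4) False by simp
    ultimately show ?thesis by simp
  qed
  then have c: "?t ! a < ?t ! length t1" using assms(2) by (simp add: nth_append)
  have lt: "length t1 < length \<sigma>" using l by simp
  have H: "\<forall>i<length \<sigma>. \<forall>j<length \<sigma>. (?t ! i < ?t ! j) = (\<sigma> ! i < \<sigma> ! j)"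
    using assms(1) l unfolding order_iso_def by simp
  have "(?t ! a < ?t ! length t1) = (\<sigma> ! a < \<sigma> ! length t1)"
    using H[rule_format, OF assms(3) lt] .
  then show ?thesis using c by simp
qed

lemma insN_Sn: "\<pi> \<in> Sn n \<Longrightarrow> j \<le> n \<Longrightarrow> insN \<pi> j \<in> Sn (Suc n)"
proof -
  assume S: "\<pi> \<in> Sn n" and j: "j \<le> n"
  have len: "length \<pi> = n" using S Sn_length by blast
  have st: "set \<pi> = {1..n}" "distinct \<pi>" using S Sn_iff by auto
  have e: "insN \<pi> j = take j \<pi> @ Suc n # drop j \<pi>" using len insN_def by simp
  have "set (insN \<pi> j) = insert (Suc n) (set \<pi>)"
    unfolding e using set_append[of "take j \<pi>" "drop j \<pi>"] by auto
  moreover have "distinct (insN \<pi> j)"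
    unfolding e using st distinct_append[of "take j \<pi>" "drop j \<pi>"]
    by (auto dest: in_set_takeD in_set_dropD)
  ultimately show ?thesis using st Sn_iff by auto
qed

lemma sorted_iso_lt:
  assumes "sorted_wrt (<) xs" "sorted_wrt (<) (ys::nat list)" "length xs = length ys"
  shows "order_iso xs ys"
proof -
  have a: "(xs ! i < xs ! j) \<longleftrightarrow> i < j" if "i < length xs" "j < length xs" for i j
    using that assms(1) sorted_wrt_nth_less[of "(<)" xs] by (metis less_asym' linorder_neqE_nat)
  have b: "(ys ! i < ys ! j) \<longleftrightarrow> i < j" if "i < length xs" "j < length xs" for i j
    using that assms sorted_wrt_nth_less[of "(<)" ys] by (metis less_asym' linorder_neqE_nat)
  show ?thesis unfolding order_iso_def using a b assms(3) by simp
qed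
lemma iso123: "x < y \<Longrightarrow> y < (z::nat) \<Longrightarrow> order_iso [x,y,z] [1,2,3]"
  by (rule sorted_iso_lt) auto
lemma iso_nth: "order_iso t s \<Longrightarrow> i < length s \<Longrightarrow> j < length s \<Longrightarrow> (t!i < t!j) = (s!i < s!j)"
  unfolding order_iso_def by simp

lemma rev_upt_sorted: "sorted_wrt (>) (rev [a..<b])"
  by (simp add: sorted_wrt_rev)

lemma core:
  assumes k: "k \<ge> 3" and C: "\<pi> \<in> Ck k" and S: "\<pi> \<in> Sn n" and j: "j \<le> n"
  shows "insN \<pi> j \<in> Ck k \<longleftrightarrow> (j \<le> dr \<pi> \<and> j \<le> k-1 \<and> (j = k-1 \<longrightarrow> \<pi>!0 = n))"
proof -
  have len: "length \<pi> = n" using S Sn_length by blast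
  have setp: "set \<pi> = {1..n}" and dist: "distinct \<pi>" using S Sn_iff by auto
  have ins: "insN \<pi> j = take j \<pi> @ Suc n # drop j \<pi>" using len insN_def by simp
  have small: "x \<le> n" if "x \<in> set \<pi>" for x using setp that by auto
  have noC: "\<not> contains (take j \<pi> @ drop j \<pi>) [1,2,3]"
     "\<not> contains (take j \<pi> @ drop j \<pi>) (rev [1..<k] @ [k+1, k])"
     "\<not> contains (take j \<pi> @ drop j \<pi>) (rev [1..<k+1] @ [k+1])"
    using C unfolding Ck_iff by auto
  show ?thesis
  proof
    assume I: "insN \<pi> j \<in> Ck k"
    have c0: "\<not> contains (insN \<pi> j) [1,2,3]" and c1: "\<not> contains (insN \<pi> j) (rev [1..<k+1] @ [k+1])"
      and c2: "\<not> contains (insN \<pi> j) (rev [1..<k] @ [k+1, k])" using I unfolding Ck_iff by auto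
    have A: "j \<le> dr \<pi>"
    proof (rule ccontr)
      assume "\<not> j \<le> dr \<pi>"
      then have "\<not> sorted_wrt (>) (take j \<pi>)" using dr_iff[of j \<pi>] j len by auto
      then obtain i i' where ii: "i < i'" "i' < length (take j \<pi>)" "\<not> (take j \<pi> ! i > take j \<pi> ! i')"
        unfolding sorted_wrt_iff_nth_less by auto
      have ij: "i' < j" "i < n" "i' < n" using ii j len by auto
      have "\<pi>!i \<noteq> \<pi>!i'" using dist ij ii(1) len by (simp add: nth_eq_iff_index_eq)
      then have lt: "\<pi>!i < \<pi>!i'" using ii ij by auto
      have "subseq [take j \<pi> ! i, take j \<pi> ! i'] (take j \<pi>)" using ii subseq_two by blast
      then have "subseq [\<pi>!i, \<pi>!i'] (take j \<pi>)" using ij ii(1) by simp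
      moreover have "subseq [Suc n] (Suc n # drop j \<pi>)" by simp
      ultimately have "subseq ([\<pi>!i, \<pi>!i'] @ [Suc n]) (insN \<pi> j)"
        unfolding ins by (rule list_emb_append_mono)
      moreover have "\<pi>!i' < Suc n" using small ij len by (simp add: less_Suc_eq_le)
      then have "order_iso [\<pi>!i, \<pi>!i', Suc n] [1,2,3]" using lt iso123 by blast
      ultimately have "contains (insN \<pi> j) [1,2,3]" unfolding contains_def by auto
      then show False using c0 by simp
    qed
    have B: "j \<le> k-1"
    proof (rule ccontr)
      assume "\<not> j \<le> k-1"
      then have kj: "k \<le> j" by simp
      have srt: "sorted_wrt (>) (take k \<pi>)" using dr_iff[of k \<pi>] A kj j len by simp
      have "subseq (take k (take j \<pi>)) (take j \<pi>)"
        by (metis append_take_drop_id subseq_rev_drop_many subseq_order.refl)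
      then have "subseq (take k \<pi>) (take j \<pi>)" using kj by (simp add: min_def)
      moreover have "subseq [Suc n] (Suc n # drop j \<pi>)" by simp
      ultimately have sub: "subseq (take k \<pi> @ [Suc n]) (insN \<pi> j)"
        unfolding ins by (rule list_emb_append_mono)
      have "order_iso (take k \<pi>) (rev [1..<k+1])"
        by (rule sorted_iso[OF srt rev_upt_sorted]) (use kj j len in simp)
      moreover have "order_iso [Suc n] [k+1]" by (simp add: order_iso_def)
      moreover have "\<forall>x\<in>set (take k \<pi>). \<forall>y\<in>set [Suc n]. x < y"
        using small by (auto dest: in_set_takeD simp: less_Suc_eq_le)
      moreover have "\<forall>x\<in>set (rev [1..<k+1]). \<forall>y\<in>set [k+1]. x < y" by auto
      ultimately have "order_iso (take k \<pi> @ [Suc n]) (rev [1..<k+1] @ [k+1])"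
        by (rule iso_append)
      then have "contains (insN \<pi> j) (rev [1..<k+1] @ [k+1])" using sub unfolding contains_def by auto
      then show False using c1 by simp
    qed
    have D: "j = k-1 \<longrightarrow> \<pi>!0 = n"
    proof (rule ccontr)
      assume "\<not> (j = k-1 \<longrightarrow> \<pi>!0 = n)"
      then have jk: "j = k-1" and p0: "\<pi>!0 \<noteq> n" by auto
      have srt: "sorted_wrt (>) (take j \<pi>)" using dr_iff[of j \<pi>] A j len by simp
      have j2: "2 \<le> j" using jk k by simp
      have "\<pi>!0 \<in> set \<pi>" using j2 j len by (intro nth_mem) simp
      then have p0n: "\<pi>!0 < n" using small[of "\<pi>!0"] p0 by linarith
      have t0: "take j \<pi> ! 0 = \<pi>!0" using j2 by simp
      have below: "x < n" if xin: "x \<in> set (take j \<pi>)" for x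
      proof -
        obtain q where q: "q < length (take j \<pi>)" "take j \<pi> ! q = x" using xin in_set_conv_nth[of x "take j \<pi>"] by blast
        show ?thesis
        proof (cases "q = 0")
          case True show ?thesis using True q(2) p0n t0 by simp
        next
          case False
          have "take j \<pi> ! 0 > take j \<pi> ! q" by (rule sorted_wrt_nth_less[OF srt]) (use False q(1) in auto)
          then show ?thesis using q(2) p0n t0 by simp
        qed
      qed
      have "n \<in> set \<pi>" using setp j2 j by auto
      then obtain q where q: "q < n" "\<pi>!q = n" using len by (metis in_set_conv_nth)
      have "q \<ge> j"
      proof (rule ccontr)
        assume "\<not> q \<ge> j"
        then have "take j \<pi> ! q = \<pi>!q" "q < length (take j \<pi>)" using q len j by auto
        then have "\<pi>!q \<in> set (take j \<pi>)" by (metis nth_mem)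
        then show False using below[of "\<pi>!q"] q(2) by simp
      qed
      then have "drop j \<pi> ! (q - j) = n" using q j len by simp
      moreover have "q - j < length (drop j \<pi>)" using q \<open>q \<ge> j\<close> len by simp
      ultimately have "n \<in> set (drop j \<pi>)" by (metis nth_mem)
      then have "subseq [Suc n, n] (Suc n # drop j \<pi>)" using subseq_single by simp
      then have sub: "subseq (take j \<pi> @ [Suc n, n]) (insN \<pi> j)" unfolding ins
        using subseq_append' by blast
      have "order_iso (take j \<pi>) (rev [1..<k])"
        by (rule sorted_iso[OF srt rev_upt_sorted]) (use jk j len in simp)
      moreover have "order_iso [Suc n, n] [k+1, k]" using sorted_iso[of "[Suc n, n]" "[k+1,k]"] by simp
      moreover have "\<forall>x\<in>set (take j \<pi>). \<forall>y\<in>set [Suc n, n]. x < y"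
      proof (intro ballI)
        fix x y assume "x \<in> set (take j \<pi>)" "y \<in> set [Suc n, n]"
        then show "x < y" using below[of x] by auto
      qed
      moreover have "\<forall>x\<in>set (rev [1..<k]). \<forall>y\<in>set [k+1, k]. x < y" by auto
      ultimately have "order_iso (take j \<pi> @ [Suc n, n]) (rev [1..<k] @ [k+1, k])"
        by (rule iso_append)
      then have "contains (insN \<pi> j) (rev [1..<k] @ [k+1, k])" using sub unfolding contains_def by auto
      then show False using c2 by simp
    qed
    show "j \<le> dr \<pi> \<and> j \<le> k-1 \<and> (j = k-1 \<longrightarrow> \<pi>!0 = n)" using A B D by blast
  next
    assume H: "j \<le> dr \<pi> \<and> j \<le> k-1 \<and> (j = k-1 \<longrightarrow> \<pi>!0 = n)"
    have srt: "sorted_wrt (>) (take j \<pi>)" using dr_iff[of j \<pi>] H j len by simp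
    have ltN: "\<forall>x\<in>set t1 \<union> set t2. x < Suc n" if "subseq t1 (take j \<pi>)" "subseq t2 (drop j \<pi>)" for t1 t2
    proof
      fix x assume "x \<in> set t1 \<union> set t2"
      then have "x \<in> set (take j \<pi>) \<or> x \<in> set (drop j \<pi>)"
        using subseq_subset[OF that(1)] subseq_subset[OF that(2)] by blast
      then have "x \<in> set \<pi>" by (meson in_set_dropD in_set_takeD)
      then show "x < Suc n" using small by (simp add: less_Suc_eq_le)
    qed
    have a0: "\<not> contains (insN \<pi> j) [1,2,3]"
    proof
      assume "contains (insN \<pi> j) [1,2,3]"
      then obtain t1 t2 where t: "subseq t1 (take j \<pi>)" "subseq t2 (drop j \<pi>)"
        "order_iso (t1 @ Suc n # t2) [1,2,3]"
        using avoid_split noC(1) unfolding ins by metis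
      have L: "length t1 + length t2 = 2" using t(3) unfolding order_iso_def by simp
      have r: "length t1 = 2"
      proof (rule ccontr)
        assume "length t1 \<noteq> 2"
        then have "[1,2,3::nat]!2 < [1,2,3]!(length t1)"
          by (intro iso_max[OF t(3) ltN[OF t(1,2)]]) simp_all
        moreover have "length t1 = 0 \<or> length t1 = 1" using L \<open>length t1 \<noteq> 2\<close> by arith
        ultimately show False by auto
      qed
      have "((t1 @ Suc n # t2)!0 < (t1 @ Suc n # t2)!1) = ([1,2,3::nat]!0 < [1,2,3]!1)"
        by (rule iso_nth[OF t(3)]) simp_all
      then have "t1!0 < t1!1" using r by (simp add: nth_append)
      moreover have "sorted_wrt (>) t1" using sorted_wrt_subseq t(1) srt by blast
      then have "t1!1 < t1!0" using r sorted_wrt_nth_less[of "(>)" t1 0 1] by simp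
      ultimately show False by simp
    qed
    have a1: "\<not> contains (insN \<pi> j) (rev [1..<k+1] @ [k+1])"
    proof
      assume "contains (insN \<pi> j) (rev [1..<k+1] @ [k+1])"
      then obtain t1 t2 where t: "subseq t1 (take j \<pi>)" "subseq t2 (drop j \<pi>)"
        "order_iso (t1 @ Suc n # t2) (rev [1..<k+1] @ [k+1])"
        using avoid_split noC(3) unfolding ins by metis
      have L: "length t1 + length t2 = k" using t(3) unfolding order_iso_def by simp
      have r: "length t1 = k"
      proof (rule ccontr)
        assume ne: "length t1 \<noteq> k"
        define R where "R = rev [1..<k+1]"
        have lR: "length R = k" and sR: "\<forall>x\<in>set R. x \<le> k" by (auto simp: R_def)
        have "(R @ [k+1])!k < (R @ [k+1])!(length t1)" unfolding R_def
          by (intro iso_max[OF t(3) ltN[OF t(1,2)]]) (use ne L in simp_all)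
        moreover have "(R @ [k+1])!k = k+1" using lR by (simp add: nth_append)
        moreover have lk: "length t1 < k" using L ne by simp
        then have "(R @ [k+1])!(length t1) = R!(length t1)" using lR by (simp add: nth_append)
        moreover have "R!(length t1) \<le> k" using sR lR lk nth_mem by blast
        ultimately show False by simp
      qed
      have "length t1 \<le> j" using list_emb_length[OF t(1)] j len by simp
      moreover have "j \<le> k-1" using H by blast
      ultimately show False using r k by simp
    qed
    have a2: "\<not> contains (insN \<pi> j) (rev [1..<k] @ [k+1, k])"
    proof
      assume "contains (insN \<pi> j) (rev [1..<k] @ [k+1, k])"
      then obtain t1 t2 where t: "subseq t1 (take j \<pi>)" "subseq t2 (drop j \<pi>)"
        "order_iso (t1 @ Suc n # t2) (rev [1..<k] @ [k+1, k])"
        using avoid_split noC(2) unfolding ins by metis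
      have L: "length t1 + length t2 = k" using t(3) k unfolding order_iso_def by simp
      have v: "(rev [1..<k] @ [k+1, k])!(k-1) = k+1" using k by (simp add: nth_append)
      have r: "length t1 = k-1"
      proof (rule ccontr)
        assume ne: "length t1 \<noteq> k-1"
        then have "(rev [1..<k] @ [k+1, k])!(k-1) < (rev [1..<k] @ [k+1, k])!(length t1)"
          using iso_max[OF t(3) ltN[OF t(1,2)]] k by simp
        moreover have "length t1 < length (rev [1..<k] @ [k+1, k])" using L k by simp
        then have "(rev [1..<k] @ [k+1, k])!(length t1) \<in> set (rev [1..<k] @ [k+1, k])"
          by (rule nth_mem)
        ultimately show False using v by auto
      qed
      have "length t1 \<le> j" using list_emb_length[OF t(1)] j len by simp
      then have jk: "j = k-1" using r H by simp
      then have t1e: "t1 = take j \<pi>" using subseq_same_length[OF t(1)] r j len by simp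
      have lt2: "length t2 = 1" using L r k by simp
      have "(t1 @ Suc n # t2)!0 = \<pi>!0" using t1e jk k j len by (simp add: nth_append)
      moreover have kk: "k = Suc (length t1)" using r k by simp
      then have "(t1 @ Suc n # t2)!k = t2!0" by (simp add: nth_append)
      moreover have "(rev [1..<k] @ [k+1, k])!0 = k-1" using k by (simp add: nth_append rev_nth)
      moreover have "(rev [1..<k] @ [k+1, k])!k = k" using k by (simp add: nth_append) arith
      moreover have "((t1 @ Suc n # t2)!0 < (t1 @ Suc n # t2)!k) =
            ((rev [1..<k] @ [k+1, k])!0 < (rev [1..<k] @ [k+1, k])!k)"
        by (rule iso_nth[OF t(3)]) (use k in simp_all)
      ultimately have "\<pi>!0 < t2!0" using k by simp
      moreover have "\<pi>!0 = n" using H jk by simp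
      moreover have "t2!0 \<in> set (drop j \<pi>)" using subseq_subset[OF t(2)] lt2 by (simp add: subset_iff)
      then have "t2!0 \<le> n" using small by (auto dest: in_set_dropD)
      ultimately show False by simp
    qed
    show "insN \<pi> j \<in> Ck k" unfolding Ck_iff using a0 a1 a2 insN_Sn[OF S j] by blast
  qed
qed

definition sites :: "nat \<Rightarrow> nat list \<Rightarrow> nat list" where
  "sites k \<pi> = filter (\<lambda>j. insN \<pi> j \<in> Ck k) [0..<Suc (length \<pi>)]"

fun plist :: "nat \<Rightarrow> nat \<Rightarrow> nat list list" where
  "plist k 0 = [[]]"
| "plist k (Suc n) = concat (map (\<lambda>\<pi>. map (insN \<pi>) (sites k \<pi>)) (plist k n))"

definition lab :: "nat \<Rightarrow> nat list \<Rightarrow> nat" where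
  "lab k \<pi> = (if dr \<pi> \<le> k-2 then dr \<pi> + 1 else if \<pi>!0 = length \<pi> then k else k-1)"

lemma empty_Ck: "[] \<in> Ck k"
proof -
  have "\<not> contains [] \<sigma>" if "\<sigma> \<noteq> []" for \<sigma>
    using that unfolding contains_def order_iso_def by (auto dest: list_emb_Nil2)
  moreover have "[] \<in> Sn 0" by (simp add: Sn_iff)
  ultimately show ?thesis unfolding Ck_iff by auto
qed

lemma decomp:
  assumes \<sigma>: "\<sigma> \<in> Ck k" "\<sigma> \<in> Sn (Suc n)" and q: "q < Suc n" "\<sigma>!q = Suc n"
  shows "\<exists>\<pi>. \<pi> \<in> Ck k \<and> \<pi> \<in> Sn n \<and> \<sigma> = insN \<pi> q \<and> q \<le> n"
proof -
  have len: "length \<sigma> = Suc n" using \<sigma>(2) Sn_length by blast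
  have st: "set \<sigma> = {1..Suc n}" "distinct \<sigma>" using \<sigma>(2) Sn_iff by auto
  define \<pi> where "\<pi> = take q \<sigma> @ drop (Suc q) \<sigma>"
  have e: "\<sigma> = take q \<sigma> @ Suc n # drop (Suc q) \<sigma>" using id_take_nth_drop[of q \<sigma>] q len by simp
  have lp: "length \<pi> = n" using len q by (simp add: \<pi>_def)
  have ins: "insN \<pi> q = \<sigma>"
  proof -
    have "take q \<pi> = take q \<sigma>" "drop q \<pi> = drop (Suc q) \<sigma>" using len q by (simp_all add: \<pi>_def)
    then show ?thesis unfolding insN_def lp using e by simp
  qed
  have d: "distinct (take q \<sigma> @ Suc n # drop (Suc q) \<sigma>)" using st(2) e by metis
  then have nin: "Suc n \<notin> set \<pi>" and dp: "distinct \<pi>" by (auto simp: \<pi>_def)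
  have "set \<sigma> = set (take q \<sigma> @ Suc n # drop (Suc q) \<sigma>)" using e by metis
  then have "set \<sigma> = insert (Suc n) (set \<pi>)" by (simp add: \<pi>_def)
  then have "set \<pi> = set \<sigma> - {Suc n}" using nin by auto
  moreover have "{1..Suc n} - {Suc n} = {1..n}" by auto
  ultimately have "set \<pi> = {1..n}" using st(1) by simp
  then have S: "\<pi> \<in> Sn n" using dp Sn_iff by blast
  have "subseq (take q \<sigma> @ drop (Suc q) \<sigma>) (take q \<sigma> @ Suc n # drop (Suc q) \<sigma>)"
    by (simp add: subseq_append' list_emb_Cons)
  then have sub: "subseq \<pi> \<sigma>" using e by (metis \<pi>_def)
  have "\<pi> \<in> Ck k" using \<sigma>(1) S sub contains_mono unfolding Ck_iff by blast
  then show ?thesis using S ins q by auto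
qed

lemma sites_mem: "j \<in> set (sites k \<pi>) \<longleftrightarrow> j \<le> length \<pi> \<and> insN \<pi> j \<in> Ck k"
  by (auto simp: sites_def less_Suc_eq_le simp del: upt_Suc)

lemma sites_distinct: "distinct (sites k \<pi>)"
  by (simp add: sites_def del: upt_Suc)

lemma set_plist: "k \<ge> 3 \<Longrightarrow> set (plist k n) = Ck k \<inter> Sn n"
proof (induction n)
  case 0
  have "Sn 0 = {[]}" by (auto simp: Sn_iff)
  then show ?case using empty_Ck by simp
next
  case (Suc n)
  show ?case
  proof
    show "set (plist k (Suc n)) \<subseteq> Ck k \<inter> Sn (Suc n)"
    proof
      fix \<sigma> assume "\<sigma> \<in> set (plist k (Suc n))"
      then obtain \<pi> j where p: "\<pi> \<in> set (plist k n)" "j \<in> set (sites k \<pi>)" "\<sigma> = insN \<pi> j" by auto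
      then have S: "\<pi> \<in> Sn n" using Suc by auto
      moreover have "j \<le> length \<pi>" "insN \<pi> j \<in> Ck k" using p(2) by (auto simp: sites_mem)
      ultimately show "\<sigma> \<in> Ck k \<inter> Sn (Suc n)" using p(3) insN_Sn Sn_length by auto
    qed
    show "Ck k \<inter> Sn (Suc n) \<subseteq> set (plist k (Suc n))"
    proof
      fix \<sigma> assume \<sigma>: "\<sigma> \<in> Ck k \<inter> Sn (Suc n)"
      then have "Suc n \<in> set \<sigma>" by (auto simp: Sn_iff)
      then obtain q where q: "q < length \<sigma>" "\<sigma>!q = Suc n" by (auto simp: in_set_conv_nth)
      have "length \<sigma> = Suc n" using \<sigma> Sn_length by auto
      then obtain \<pi> where \<pi>: "\<pi> \<in> Ck k" "\<pi> \<in> Sn n" "\<sigma> = insN \<pi> q" "q \<le> n"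
        using decomp[of \<sigma> k n q] \<sigma> q by auto
      have "\<pi> \<in> set (plist k n)" using Suc \<pi> by auto
      moreover have "q \<in> set (sites k \<pi>)" using \<pi> \<sigma> Sn_length[OF \<pi>(2)] by (auto simp: sites_mem)
      ultimately show "\<sigma> \<in> set (plist k (Suc n))" using \<pi>(3) by auto
    qed
  qed
qed

lemma distinct_concat_map:
  "distinct xs \<Longrightarrow> (\<forall>x\<in>set xs. distinct (f x)) \<Longrightarrow>
   (\<forall>x\<in>set xs. \<forall>y\<in>set xs. x \<noteq> y \<longrightarrow> set (f x) \<inter> set (f y) = {}) \<Longrightarrow> distinct (concat (map f xs))"
  by (induction xs) auto

lemma insN_filter: "Suc n \<notin> set \<rho> \<Longrightarrow> length \<rho> = n \<Longrightarrow> filter (\<lambda>x. x \<noteq> Suc n) (insN \<rho> i) = \<rho>"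
proof -
  assume a: "Suc n \<notin> set \<rho>" "length \<rho> = n"
  have "\<forall>x\<in>set \<rho>. x \<noteq> Suc n" using a(1) by auto
  then have "filter (\<lambda>x. x \<noteq> Suc n) (take i \<rho>) = take i \<rho>" "filter (\<lambda>x. x \<noteq> Suc n) (drop i \<rho>) = drop i \<rho>"
    by (auto simp: filter_id_conv dest: in_set_takeD in_set_dropD)
  then show ?thesis by (simp add: insN_def a(2))
qed

lemma insN_tw: "Suc n \<notin> set \<rho> \<Longrightarrow> length \<rho> = n \<Longrightarrow> i \<le> n \<Longrightarrow> length (takeWhile (\<lambda>x. x \<noteq> Suc n) (insN \<rho> i)) = i"
proof -
  assume a: "Suc n \<notin> set \<rho>" "length \<rho> = n" "i \<le> n"
  have "takeWhile (\<lambda>x. x \<noteq> Suc n) (insN \<rho> i) = take i \<rho>"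
    unfolding insN_def a(2) using a(1) by (subst takeWhile_append2) (auto dest: in_set_takeD)
  then show ?thesis using a by simp
qed

lemma insN_inj:
  assumes "\<pi> \<in> Sn n" "\<pi>' \<in> Sn n" "j \<le> n" "j' \<le> n" "insN \<pi> j = insN \<pi>' j'"
  shows "\<pi> = \<pi>' \<and> j = j'"
proof -
  have l: "length \<pi> = n" "length \<pi>' = n" using assms Sn_length by auto
  have nin: "Suc n \<notin> set \<pi>" "Suc n \<notin> set \<pi>'" using assms(1,2) by (auto simp: Sn_iff)
  have "filter (\<lambda>x. x \<noteq> Suc n) (insN \<pi> j) = filter (\<lambda>x. x \<noteq> Suc n) (insN \<pi>' j')"
    using assms(5) by (rule arg_cong)
  then have 1: "\<pi> = \<pi>'" by (simp only: insN_filter[OF nin(1) l(1)] insN_filter[OF nin(2) l(2)])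
  have "length (takeWhile (\<lambda>x. x \<noteq> Suc n) (insN \<pi> j)) = length (takeWhile (\<lambda>x. x \<noteq> Suc n) (insN \<pi>' j'))"
    using assms(5) by (rule arg_cong)
  then have 2: "j = j'" by (simp only: insN_tw[OF nin(1) l(1) assms(3)] insN_tw[OF nin(2) l(2) assms(4)])
  show ?thesis using 1 2 by simp
qed

lemma distinct_plist: "k \<ge> 3 \<Longrightarrow> distinct (plist k n)"
proof (induction n)
  case 0 then show ?case by simp
next
  case (Suc n)
  have S: "\<pi> \<in> Sn n" if "\<pi> \<in> set (plist k n)" for \<pi> using set_plist[OF Suc.prems] that by auto
  have sl: "j \<le> n" if "\<pi> \<in> set (plist k n)" "j \<in> set (sites k \<pi>)" for \<pi> j
    using that S[OF that(1)] Sn_length by (auto simp: sites_mem)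
  show ?case unfolding plist.simps
  proof (rule distinct_concat_map)
    show "distinct (plist k n)" using Suc by simp
    show "\<forall>x\<in>set (plist k n). distinct (map (insN x) (sites k x))"
    proof
      fix \<pi> assume p: "\<pi> \<in> set (plist k n)"
      have "distinct (sites k \<pi>)" by (rule sites_distinct)
      moreover have "inj_on (insN \<pi>) (set (sites k \<pi>))"
        using insN_inj[OF S[OF p] S[OF p]] sl[OF p] by (meson inj_onI)
      ultimately show "distinct (map (insN \<pi>) (sites k \<pi>))" by (simp add: distinct_map)
    qed
    show "\<forall>x\<in>set (plist k n). \<forall>y\<in>set (plist k n). x \<noteq> y \<longrightarrow>
        set (map (insN x) (sites k x)) \<inter> set (map (insN y) (sites k y)) = {}"
    proof (intro ballI impI)
      fix x y assume x: "x \<in> set (plist k n)" and y: "y \<in> set (plist k n)" and xy: "x \<noteq> y"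
      show "set (map (insN x) (sites k x)) \<inter> set (map (insN y) (sites k y)) = {}"
      proof (rule ccontr)
        assume "set (map (insN x) (sites k x)) \<inter> set (map (insN y) (sites k y)) \<noteq> {}"
        then obtain i i' where ii: "i \<in> set (sites k x)" "i' \<in> set (sites k y)" "insN x i = insN y i'"
          by auto
        show False using insN_inj[OF S[OF x] S[OF y] sl[OF x ii(1)] sl[OF y ii(2)] ii(3)] xy by blast
      qed
    qed
  qed
qed

lemma dr_eq:
  assumes "j \<le> length xs" "sorted_wrt (>) (take j xs)"
    "j < length xs \<Longrightarrow> \<not> sorted_wrt (>) (take (Suc j) xs)"
  shows "dr xs = j"
proof -
  have "j \<le> dr xs" using dr_iff assms(1,2) by blast
  moreover have "\<not> Suc j \<le> dr xs"
  proof
    assume a: "Suc j \<le> dr xs"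
    then have "Suc j \<le> length xs" using dr_le order_trans by blast
    then show False using dr_iff[of "Suc j" xs] a assms(3) by simp
  qed
  ultimately show ?thesis by simp
qed

lemma dr_Cons_max: "\<forall>x\<in>set xs. x < y \<Longrightarrow> dr (y # xs) = Suc (dr xs)"
  by (cases xs) auto

lemma children_ok:
  assumes k: "k \<ge> 3" and C: "\<pi> \<in> Ck k" and S: "\<pi> \<in> Sn n"
  shows "mset (map (lab k \<circ> insN \<pi>) (sites k \<pi>)) = mset (children k (lab k \<pi>))"
proof -
  have len: "length \<pi> = n" using S Sn_length by blast
  have small: "x \<le> n" if "x \<in> set \<pi>" for x using S that by (auto simp: Sn_iff)
  define m where "m = dr \<pi>"
  have mn: "m \<le> n" using dr_le len m_def by metis
  define a where "a = min m (k-2)"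
  define c where "c = (k-1 \<le> m \<and> \<pi>!0 = n)"
  define V where "V j = (j \<le> m \<and> j \<le> k-1 \<and> (j = k-1 \<longrightarrow> \<pi>!0 = n))" for j
  have an: "a \<le> n" using mn a_def by simp
  have "sites k \<pi> = filter V [0..<Suc n]"
    unfolding sites_def len
  proof (rule filter_cong[OF refl])
    fix j assume "j \<in> set [0..<Suc n]"
    then have "j \<le> n" by (simp del: upt_Suc)
    then show "(insN \<pi> j \<in> Ck k) = V j" using core[OF k C S, of j] by (simp add: V_def m_def)
  qed
  also have "[0..<Suc n] = [0..<Suc a] @ [Suc a..<Suc n]" using an upt_add_eq_append[of 0 "Suc a" "n - a"] by simp
  also have "filter V ([0..<Suc a] @ [Suc a..<Suc n]) = [0..<Suc a] @ (if c then [k-1] else [])"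
  proof -
    have "filter V [0..<Suc a] = [0..<Suc a]"
      using k by (auto simp: filter_id_conv V_def a_def simp del: upt_Suc)
    moreover have "filter V [Suc a..<Suc n] = (if c then [k-1] else [])"
    proof (cases c)
      case True
      then have ak: "Suc a = k-1" "k - 1 \<le> n" using k mn by (auto simp: a_def c_def)
      have "[Suc a..<Suc n] = (k-1) # [k..<Suc n]" using ak k by (simp add: upt_conv_Cons del: upt_Suc)
      moreover have "V (k-1)" using True by (simp add: V_def c_def)
      moreover have "filter V [k..<Suc n] = []" using k by (auto simp: filter_empty_conv V_def simp del: upt_Suc)
      ultimately show ?thesis using True by simp
    next
      case False
      have "filter V [Suc a..<Suc n] = []"
        using False k by (auto simp: filter_empty_conv V_def a_def c_def simp del: upt_Suc)
      then show ?thesis using False by simp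
    qed
    ultimately show ?thesis by (simp only: filter_append)
  qed
  finally have sites: "sites k \<pi> = [0..<Suc a] @ (if c then [k-1] else [])" .
  have L0: "lab k (insN \<pi> 0) = (if m \<le> k-2 then m+2 else k)"
  proof -
    have e: "insN \<pi> 0 = Suc n # \<pi>" by (simp add: insN_def len)
    have "dr (Suc n # \<pi>) = Suc m" unfolding m_def
      by (rule dr_Cons_max) (use small in \<open>auto simp: less_Suc_eq_le\<close>)
    then show ?thesis unfolding e lab_def using k len by auto
  qed
  have Lj: "lab k (insN \<pi> j) = (if j \<le> k-2 then j+1 else k-1)" if j: "1 \<le> j" "j \<le> m" "j \<le> k-1" for j
  proof -
    let ?x = "insN \<pi> j"
    have e: "?x = take j \<pi> @ Suc n # drop j \<pi>" by (simp add: insN_def len)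
    have jn: "j \<le> n" using j mn by simp
    have srt: "sorted_wrt (>) (take j \<pi>)" using dr_iff[of j \<pi>] j jn len m_def by simp
    have p0: "\<pi>!0 \<in> set (take j \<pi>)" using j jn len
      by (metis in_set_conv_nth length_take min.absorb2 nth_take order_less_le_trans zero_less_one)
    have "dr ?x = j"
    proof (rule dr_eq)
      show "j \<le> length ?x" using e jn len by simp
      show "sorted_wrt (>) (take j ?x)" using e srt jn len by simp
      have "take (Suc j) ?x = take j \<pi> @ [Suc n]" using e jn len by (simp add: take_Suc_conv_app_nth nth_append)
      moreover have "\<pi>!0 < Suc n" using small p0 by (meson in_set_takeD le_imp_less_Suc)
      ultimately show "\<not> sorted_wrt (>) (take (Suc j) ?x)" using p0
        by (auto simp: sorted_wrt_append intro!: bexI[of _ "\<pi>!0"])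
    qed
    moreover have "?x ! 0 = \<pi>!0" using e j jn len by (simp add: nth_append)
    moreover have "length ?x = Suc n" using e jn len by simp
    moreover have "\<pi>!0 \<le> n" using small p0 by (meson in_set_takeD)
    ultimately have "dr ?x = j" "?x ! 0 = \<pi>!0" "\<pi>!0 \<noteq> length ?x" by auto
    then show ?thesis unfolding lab_def by simp
  qed
  have map1: "map (lab k \<circ> insN \<pi>) [1..<Suc a] = [2..<Suc (Suc a)]"
  proof -
    have "map (lab k \<circ> insN \<pi>) [1..<Suc a] = map Suc [1..<Suc a]"
      using Lj by (intro map_cong) (auto simp: a_def)
    then show ?thesis by (simp add: map_Suc_upt numeral_2_eq_2 del: upt_Suc)
  qed
  have list: "map (lab k \<circ> insN \<pi>) (sites k \<pi>) =
      lab k (insN \<pi> 0) # [2..<Suc (Suc a)] @ (if c then [lab k (insN \<pi> (k-1))] else [])"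
    unfolding sites using map1 by (simp add: upt_conv_Cons del: upt_Suc)
  show ?thesis
  proof (cases "m \<le> k-2")
    case True
    then have "a = m" "\<not> c" using k by (auto simp: a_def c_def)
    moreover have "lab k \<pi> = m+1" using True by (simp add: lab_def m_def)
    ultimately have l: "map (lab k \<circ> insN \<pi>) (sites k \<pi>) = (m+2) # [2..<m+2]" and lp: "lab k \<pi> = m+1"
      using list L0 True by auto
    show ?thesis
    proof (cases "m = 0")
      case True then show ?thesis using l lp by (simp add: children_def)
    next
      case False
      have "Suc m < k" using True k by arith
      then have "children k (lab k \<pi>) = [2..<m+2] @ [m+2]" using lp False by (simp add: children_def)
      then show ?thesis using l by simp
    qed
  next
    case False
    then have am: "a = k-2" "k-1 \<le> m" using k by (auto simp: a_def)
    have ss: "Suc (Suc (k-2)) = k" using k by simp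
    show ?thesis
    proof (cases c)
      case True
      then have "lab k \<pi> = k" using False len by (simp add: lab_def m_def c_def)
      moreover have "lab k (insN \<pi> (k-1)) = k-1" using Lj[of "k-1"] am k by simp
      ultimately show ?thesis using list L0 False True am ss by (simp add: children_def del: upt_Suc)
    next
      case c: False
      then have "lab k \<pi> = k-1" using False am len by (simp add: lab_def m_def c_def)
      moreover have "[2..<k+1] = [2..<k] @ [k]" using k by simp
      ultimately show ?thesis using list L0 False c am ss k by (simp add: children_def del: upt_Suc)
    qed
  qed
qed

lemma mset_concat_map: "mset (concat (map f xs)) = sum_list (map (\<lambda>x. mset (f x)) xs)"
  by (induction xs) auto

lemma sum_list_map_mset: fixes g :: "'a \<Rightarrow> 'b::comm_monoid_add" shows "mset xs = mset ys \<Longrightarrow> sum_list (map g xs) = sum_list (map g ys)"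
proof -
  assume e: "mset xs = mset ys"
  have "sum_list (map g xs) = sum_mset (mset (map g xs))" by (rule sum_mset_sum_list[symmetric])
  also have "\<dots> = sum_mset (image_mset g (mset xs))" by (simp only: mset_map)
  also have "\<dots> = sum_mset (image_mset g (mset ys))" by (simp only: e)
  also have "\<dots> = sum_mset (mset (map g ys))" by (simp only: mset_map)
  also have "\<dots> = sum_list (map g ys)" by (rule sum_mset_sum_list)
  finally show ?thesis .
qed

lemma mset_plist: "k \<ge> 3 \<Longrightarrow> mset (map (lab k) (plist k n)) = mset (level k n)"
proof (induction n)
  case 0
  have "lab k [] = 1" by (simp add: lab_def)
  then show ?case by simp
next
  case (Suc n)
  have "mset (map (lab k) (plist k (Suc n))) =
     mset (concat (map (\<lambda>\<pi>. map (lab k \<circ> insN \<pi>) (sites k \<pi>)) (plist k n)))"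
    by (simp only: plist.simps map_concat map_map comp_def)
  also have "\<dots> = sum_list (map (\<lambda>\<pi>. mset (map (lab k \<circ> insN \<pi>) (sites k \<pi>))) (plist k n))"
    by (rule mset_concat_map)
  also have "\<dots> = sum_list (map (\<lambda>\<pi>. mset (children k (lab k \<pi>))) (plist k n))"
  proof (rule arg_cong[where f=sum_list], rule map_cong[OF refl])
    fix \<pi> assume "\<pi> \<in> set (plist k n)"
    then have "\<pi> \<in> Ck k \<inter> Sn n" using set_plist[OF Suc.prems] by simp
    then have "\<pi> \<in> Ck k" "\<pi> \<in> Sn n" by simp_all
    then show "mset (map (lab k \<circ> insN \<pi>) (sites k \<pi>)) = mset (children k (lab k \<pi>))"
      by (rule children_ok[OF Suc.prems])
  qed
  also have "\<dots> = sum_list (map (\<lambda>h. mset (children k h)) (map (lab k) (plist k n)))"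
    by (simp only: map_map comp_def)
  also have "\<dots> = sum_list (map (\<lambda>h. mset (children k h)) (level k n))"
    by (rule sum_list_map_mset[OF Suc.IH[OF Suc.prems]])
  also have "\<dots> = mset (level k (Suc n))"
    by (simp only: level.simps mset_concat_map)
  finally show ?case .
qed

theorem mainTheorem7:
  fixes k :: nat
  assumes "k \<ge> 3"
  shows "(\<forall>n\<ge>1. \<forall>p\<in>Ck k \<inter> Sn n. \<forall>l. 1 \<le> l \<and> l \<le> n \<and> p ! (l - 1) = n \<longrightarrow> l \<le> k)
       \<and> (\<forall>n. card (Ck k \<inter> Sn n) = length (level k n))"
proof (intro conjI allI impI ballI)
  fix n p l assume n: "n \<ge> 1" and p: "p \<in> Ck k \<inter> Sn n" and l: "1 \<le> l \<and> l \<le> n \<and> p ! (l - 1) = n"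
  obtain n' where n': "n = Suc n'" using n by (cases n) auto
  have lq: "l - 1 < Suc n'" "p ! (l-1) = Suc n'" using l n' by auto
  have pC: "p \<in> Ck k" "p \<in> Sn (Suc n')" using p n' by auto
  obtain \<pi> where \<pi>: "\<pi> \<in> Ck k" "\<pi> \<in> Sn n'" "p = insN \<pi> (l-1)" "l - 1 \<le> n'"
    using decomp[OF pC lq] by (elim exE conjE)
  then have "insN \<pi> (l-1) \<in> Ck k" using p by simp
  then have "l - 1 \<le> k - 1" using core[OF assms \<pi>(1,2,4)] by blast
  then show "l \<le> k" using l assms by simp
next
  fix n
  have "card (Ck k \<inter> Sn n) = card (set (plist k n))" using set_plist[OF assms] by simp
  also have "\<dots> = length (plist k n)" using distinct_plist[OF assms] by (simp add: distinct_card)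
  also have "\<dots> = size (mset (map (lab k) (plist k n)))" by simp
  also have "\<dots> = size (mset (level k n))" by (simp only: mset_plist[OF assms])
  also have "\<dots> = length (level k n)" by simp
  finally show "card (Ck k \<inter> Sn n) = length (level k n)" .
qed

end
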